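(* Let $J$ be a bounded closed nondegenerate interval of length $|J|$. Then $$ \left\|\frac{e^x-e^y}{e^x+e^y}\right\|_{\mathfrak M_{J,J}}\ge\frac19\min\big\{|J|,\ 1+\log_+|J|\big\}. $$
   Context: For positive $\sigma$-finite measures $\mu$ on $\mathcal X$ and $\nu$ on $\mathcal Y$ and $k\in L^2(\mu\otimes\nu)$, $\|k\|_{\mathcal B}^{\mu,\nu}$ denotes the operator norm of the integral operator $g\mapsto\int k(x,y)g(y)\,d\nu(y)$ from $L^2(\nu)$ to $L^2(\mu)$. For closed $\mathcal X,\mathcal Y\subset\mathbb R$ and a bounded Borel function $\Phi$ on $\mathcal X\times\mathcal Y$, the Schur multiplier norm is $\|\Phi\|_{\mathfrak M_{\mathcal X,\mathcal Y}}\stackrel{\mathrm{def}}{=}\sup_{\mu,\nu}\sup\{\|\Phi k\|_{\mathcal B}^{\mu,\nu}: k\in L^2(\mu\otimes\nu),\ \|k\|_{\mathcal B}^{\mu,\nu}\le1\}$, the outer supremum over all regular positive Borel measures $\mu$ on $\mathcal X$ and $\nu$ on $\mathcal Y$. $\log_+t=\max\{\log t,0\}$. *)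

theory Defs
  imports "HOL-Analysis.Analysis"
begin

definition regular_borel_measure :: "real set \<Rightarrow> real measure \<Rightarrow> bool" where
  "regular_borel_measure X M \<longleftrightarrow>
     space M = X \<and> sets M = sets (restrict_space borel X) \<and> sigma_finite_measure M \<and>
     (\<forall>B\<in>sets M.
        emeasure M B = (INF U\<in>{U. \<exists>V. open V \<and> U = V \<inter> X \<and> B \<subseteq> U}. emeasure M U) \<and>
        emeasure M B = (SUP K\<in>{K. compact K \<and> K \<subseteq> B}. emeasure M K))"

definition L2 :: "'a measure \<Rightarrow> ('a \<Rightarrow> complex) set" where
  "L2 M = {g. g \<in> borel_measurable M \<and> integrable M (\<lambda>x. (cmod (g x))^2)}"

definition L2norm :: "'a measure \<Rightarrow> ('a \<Rightarrow> complex) \<Rightarrow> real" where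
  "L2norm M g = sqrt (\<integral>x. (cmod (g x))^2 \<partial>M)"

definition intop :: "'b measure \<Rightarrow> ('a \<times> 'b \<Rightarrow> complex) \<Rightarrow> ('b \<Rightarrow> complex) \<Rightarrow> 'a \<Rightarrow> complex" where
  "intop \<nu> k g = (\<lambda>x. \<integral>y. k (x, y) * g y \<partial>\<nu>)"

definition opnorm :: "'a measure \<Rightarrow> 'b measure \<Rightarrow> ('a \<times> 'b \<Rightarrow> complex) \<Rightarrow> ereal" where
  "opnorm \<mu> \<nu> k = (SUP g\<in>{g\<in>L2 \<nu>. L2norm \<nu> g \<le> 1}. ereal (L2norm \<mu> (intop \<nu> k g)))"

definition schur_norm :: "real set \<Rightarrow> real set \<Rightarrow> (real \<times> real \<Rightarrow> complex) \<Rightarrow> ereal" where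
  "schur_norm X Y \<Phi> =
     (SUP (\<mu>, \<nu>, k)\<in>{(\<mu>, \<nu>, k). regular_borel_measure X \<mu> \<and> regular_borel_measure Y \<nu> \<and>
                       k \<in> L2 (\<mu> \<Otimes>\<^sub>M \<nu>) \<and> opnorm \<mu> \<nu> k \<le> 1}.
        opnorm \<mu> \<nu> (\<lambda>p. \<Phi> p * k p))"

definition log_plus :: "real \<Rightarrow> real" where
  "log_plus t = max (ln t) 0"

end

theory Submission
  imports Defs
begin

definition dm :: "real \<Rightarrow> real \<Rightarrow> nat \<Rightarrow> (nat \<Rightarrow> real) \<Rightarrow> real measure" where
  "dm a b N x = distr (count_space {..<N}) (restrict_space borel {a..b}) x"

lemma dm_meas:
  assumes "x ` {..<N} \<subseteq> {a..b}"
  shows "x \<in> count_space {..<N} \<rightarrow>\<^sub>M restrict_space borel {a..b}"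
  using assms by (auto simp: measurable_count_space_eq1 space_restrict_space)

lemma space_dm[simp]: "space (dm a b N x) = {a..b}"
  by (simp add: dm_def space_restrict_space)

lemma sets_dm[simp]: "sets (dm a b N x) = sets (restrict_space borel {a..b})"
  by (simp add: dm_def)

lemma meas_dm_iff: "(f \<in> borel_measurable (dm a b N x)) = (f \<in> borel_measurable (restrict_space borel {a..b}))"
  by (simp add: dm_def)

lemma integral_dm:
  fixes f :: "real \<Rightarrow> 'c::{banach,second_countable_topology}"
  assumes "x ` {..<N} \<subseteq> {a..b}" "f \<in> borel_measurable (restrict_space borel {a..b})"
  shows "integral\<^sup>L (dm a b N x) f = (\<Sum>i<N. f (x i))"
  unfolding dm_def
  by (simp add: integral_distr[OF dm_meas[OF assms(1)] assms(2)] lebesgue_integral_count_space_finite)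

lemma emeasure_dm:
  assumes "x ` {..<N} \<subseteq> {a..b}" "B \<in> sets (restrict_space borel {a..b})"
  shows "emeasure (dm a b N x) B = of_nat (card {i. i < N \<and> x i \<in> B})"
proof -
  have "emeasure (dm a b N x) B = emeasure (count_space {..<N}) (x -` B \<inter> {..<N})"
    unfolding dm_def using emeasure_distr[OF dm_meas[OF assms(1)] assms(2)] by simp
  also have "\<dots> = of_nat (card (x -` B \<inter> {..<N}))"
    by (rule emeasure_count_space_finite) auto
  also have "x -` B \<inter> {..<N} = {i. i < N \<and> x i \<in> B}" by auto
  finally show ?thesis .
qed

lemma finite_dm:
  assumes "x ` {..<N} \<subseteq> {a..b}"
  shows "finite_measure (dm a b N x)"
  unfolding dm_def
  by (rule finite_measure.finite_measure_distr[OF _ dm_meas[OF assms]])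
     (simp add: finite_measure_count_space)

lemma regular_dm:
  assumes "x ` {..<N} \<subseteq> {a..b}"
  shows "regular_borel_measure {a..b} (dm a b N x)"
  unfolding regular_borel_measure_def
proof (intro conjI ballI)
  show "sigma_finite_measure (dm a b N x)"
    using finite_dm[OF assms] by (simp add: finite_measure_def)
next
  fix B assume B: "B \<in> sets (dm a b N x)"
  hence Bs: "B \<in> sets (restrict_space borel {a..b})" by simp
  hence Bsub: "B \<subseteq> {a..b}" using sets.sets_into_space by (fastforce simp: space_restrict_space)
  let ?P = "x ` {..<N}"
  have Pfin: "finite ?P" by simp
  define V where "V = - (?P - B)"
  have Vo: "open V" unfolding V_def using Pfin by (intro open_Compl finite_imp_closed) auto
  have U: "V \<inter> {a..b} \<in> {U. \<exists>V. open V \<and> U = V \<inter> {a..b} \<and> B \<subseteq> U}"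
    using Vo Bsub by (auto simp: V_def)
  have Us: "V \<inter> {a..b} \<in> sets (restrict_space borel {a..b})"
    using Vo by (auto simp: sets_restrict_space_iff)
  have eqU: "{i. i < N \<and> x i \<in> V \<inter> {a..b}} = {i. i < N \<and> x i \<in> B}"
    using assms by (auto simp: V_def)
  have "(INF U\<in>{U. \<exists>V. open V \<and> U = V \<inter> {a..b} \<and> B \<subseteq> U}. emeasure (dm a b N x) U) \<le> emeasure (dm a b N x) (V \<inter> {a..b})"
    by (rule INF_lower[OF U])
  also have "\<dots> = emeasure (dm a b N x) B"
    using emeasure_dm[OF assms Us] emeasure_dm[OF assms Bs] eqU by simp
  finally have le1: "(INF U\<in>{U. \<exists>V. open V \<and> U = V \<inter> {a..b} \<and> B \<subseteq> U}. emeasure (dm a b N x) U) \<le> emeasure (dm a b N x) B" .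
  have ge1: "emeasure (dm a b N x) B \<le> (INF U\<in>{U. \<exists>V. open V \<and> U = V \<inter> {a..b} \<and> B \<subseteq> U}. emeasure (dm a b N x) U)"
  proof (rule INF_greatest)
    fix U assume "U \<in> {U. \<exists>V. open V \<and> U = V \<inter> {a..b} \<and> B \<subseteq> U}"
    then obtain W where W: "open W" "U = W \<inter> {a..b}" "B \<subseteq> U" by auto
    have "U \<in> sets (dm a b N x)" using W by (auto simp: sets_restrict_space_iff)
    thus "emeasure (dm a b N x) B \<le> emeasure (dm a b N x) U" using W(3) by (intro emeasure_mono)
  qed
  show "emeasure (dm a b N x) B = (INF U\<in>{U. \<exists>V. open V \<and> U = V \<inter> {a..b} \<and> B \<subseteq> U}. emeasure (dm a b N x) U)"
    using le1 ge1 by (rule antisym[rotated])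
  define K where "K = ?P \<inter> B"
  have Kc: "compact K" unfolding K_def by (rule finite_imp_compact) simp
  have KB: "K \<subseteq> B" by (simp add: K_def)
  have Ks: "K \<in> sets (restrict_space borel {a..b})"
    using Kc KB Bsub by (auto simp: sets_restrict_space_iff compact_imp_closed borel_closed intro!: exI[of _ K])
  have eqK: "{i. i < N \<and> x i \<in> K} = {i. i < N \<and> x i \<in> B}" by (auto simp: K_def)
  have "emeasure (dm a b N x) B = emeasure (dm a b N x) K"
    using emeasure_dm[OF assms Ks] emeasure_dm[OF assms Bs] eqK by simp
  also have "\<dots> \<le> (SUP K\<in>{K. compact K \<and> K \<subseteq> B}. emeasure (dm a b N x) K)"
    by (rule SUP_upper) (use Kc KB in auto)
  finally have ge2: "emeasure (dm a b N x) B \<le> (SUP K\<in>{K. compact K \<and> K \<subseteq> B}. emeasure (dm a b N x) K)" .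
  have le2: "(SUP K\<in>{K. compact K \<and> K \<subseteq> B}. emeasure (dm a b N x) K) \<le> emeasure (dm a b N x) B"
  proof (rule SUP_least)
    fix K' assume "K' \<in> {K. compact K \<and> K \<subseteq> B}"
    hence "K' \<subseteq> B" "compact K'" by auto
    thus "emeasure (dm a b N x) K' \<le> emeasure (dm a b N x) B"
      using B by (intro emeasure_mono) auto
  qed
  show "emeasure (dm a b N x) B = (SUP K\<in>{K. compact K \<and> K \<subseteq> B}. emeasure (dm a b N x) K)"
    using le2 ge2 by (rule antisym[rotated])
qed simp_all

definition phi :: "real \<times> real \<Rightarrow> complex" where
  "phi = (\<lambda>(x, y). complex_of_real ((exp x - exp y) / (exp x + exp y)))"

definition kk :: "nat \<Rightarrow> (nat \<Rightarrow> real) \<Rightarrow> nat \<Rightarrow> (nat \<Rightarrow> real) \<Rightarrow> (nat \<Rightarrow> nat \<Rightarrow> complex) \<Rightarrow> real \<times> real \<Rightarrow> complex" where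
  "kk N x M y K p = (\<Sum>i<N. \<Sum>j<M. K i j * indicator {x i} (fst p) * indicator {y j} (snd p))"

lemma rb: "f \<in> borel_measurable borel \<Longrightarrow> f \<in> borel_measurable (restrict_space borel X)"
  by (rule measurable_restrict_space1)

lemma kk_meas1: "(\<lambda>s. kk N x M y K (s, t)) \<in> borel_measurable borel"
  unfolding kk_def by measurable
lemma kk_meas2: "(\<lambda>t. kk N x M y K (s, t)) \<in> borel_measurable borel"
  unfolding kk_def by measurable
lemma phi_meas1: "(\<lambda>s. phi (s, t)) \<in> borel_measurable borel"
  apply (simp add: phi_def) by measurable
lemma phi_meas2: "(\<lambda>t. phi (s, t)) \<in> borel_measurable borel"
  apply (simp add: phi_def) by measurable

lemma kk_eval:
  assumes "inj_on x {..<N}" "inj_on y {..<M}" "i < N" "j < M"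
  shows "kk N x M y K (x i, y j) = K i j"
proof -
  have "kk N x M y K (x i, y j) = (\<Sum>i'<N. \<Sum>j'<M. if i' = i then (if j' = j then K i j else 0) else 0)"
    unfolding kk_def
    by (intro sum.cong refl) (use assms in \<open>auto simp: indicator_def inj_on_def\<close>)
  also have "\<dots> = (\<Sum>i'<N. if i' = i then (\<Sum>j'<M. if j' = j then K i j else 0) else 0)"
    by (intro sum.cong refl) auto
  also have "\<dots> = K i j" using assms by simp
  finally show ?thesis .
qed

lemma L2norm_dm:
  assumes "x ` {..<N} \<subseteq> {a..b}" "f \<in> borel_measurable (restrict_space borel {a..b})"
  shows "L2norm (dm a b N x) f = sqrt (\<Sum>i<N. (cmod (f (x i)))^2)"
  unfolding L2norm_def using assms
  by (subst integral_dm) (auto intro!: borel_measurable_power borel_measurable_norm)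

lemma intop_dm:
  assumes "y ` {..<M} \<subseteq> {a..b}" "(\<lambda>t. k (s, t) * g t) \<in> borel_measurable (restrict_space borel {a..b})"
  shows "intop (dm a b M y) k g s = (\<Sum>j<M. k (s, y j) * g (y j))"
  unfolding intop_def using assms by (simp add: integral_dm)


lemma schur_lower:
  fixes N M :: nat and x y :: "nat \<Rightarrow> real" and K :: "nat \<Rightarrow> nat \<Rightarrow> complex" and c :: complex
  assumes xs: "x ` {..<N} \<subseteq> {a..b}" "inj_on x {..<N}"
    and ys: "y ` {..<M} \<subseteq> {a..b}" "inj_on y {..<M}"
    and Kb: "\<And>g. (\<Sum>i<N. (cmod (\<Sum>j<M. K i j * g j))^2) \<le> (\<Sum>j<M. (cmod (g j))^2)"
    and c: "real M * (cmod c)^2 \<le> 1"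
  shows "ereal (sqrt (\<Sum>i<N. (cmod (\<Sum>j<M. phi (x i, y j) * K i j * c))^2)) \<le> schur_norm {a..b} {a..b} phi"
proof -
  define \<mu> where "\<mu> = dm a b N x"
  define \<nu> where "\<nu> = dm a b M y"
  define k where "k = kk N x M y K"
  have fm: "finite_measure \<mu>" "finite_measure \<nu>" unfolding \<mu>_def \<nu>_def using finite_dm xs ys by auto
  have kmeas: "k \<in> borel_measurable (\<mu> \<Otimes>\<^sub>M \<nu>)"
  proof -
    have kR: "k \<in> borel_measurable (restrict_space borel {a..b} \<Otimes>\<^sub>M restrict_space borel {a..b})"
      unfolding k_def kk_def
    proof (intro borel_measurable_sum borel_measurable_times borel_measurable_const)
      have ind: "(\<lambda>s. indicator {t} s :: complex) \<in> borel_measurable (restrict_space borel {a..b})" for t :: real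
        by (rule rb) measurable
      fix i j
      show "(\<lambda>p. indicator {x i} (fst p) :: complex) \<in> borel_measurable (restrict_space borel {a..b} \<Otimes>\<^sub>M restrict_space borel {a..b})"
        by (rule measurable_compose[OF measurable_fst ind])
      show "(\<lambda>p. indicator {y j} (snd p) :: complex) \<in> borel_measurable (restrict_space borel {a..b} \<Otimes>\<^sub>M restrict_space borel {a..b})"
        by (rule measurable_compose[OF measurable_snd ind])
    qed
    have seq: "sets (\<mu> \<Otimes>\<^sub>M \<nu>) = sets (restrict_space borel {a..b} \<Otimes>\<^sub>M restrict_space borel {a..b})"
      unfolding \<mu>_def \<nu>_def by (intro sets_pair_measure_cong) simp_all
    have meq: "borel_measurable (\<mu> \<Otimes>\<^sub>M \<nu>) = borel_measurable (restrict_space borel {a..b} \<Otimes>\<^sub>M restrict_space borel {a..b})"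
      by (rule measurable_cong_sets[OF seq refl])
    show ?thesis using kR unfolding meq .
  qed
  have kL2: "k \<in> L2 (\<mu> \<Otimes>\<^sub>M \<nu>)"
  proof -
    define B where "B = (\<Sum>i<N. \<Sum>j<M. cmod (K i j))"
    have bnd: "cmod (k p) \<le> B" for p
      unfolding k_def kk_def B_def
      by (rule order.trans[OF norm_sum sum_mono], rule order.trans[OF norm_sum sum_mono])
         (auto simp: norm_mult indicator_def)
    have "integrable (\<mu> \<Otimes>\<^sub>M \<nu>) (\<lambda>p. (cmod (k p))^2)"
    proof (rule finite_measure.integrable_const_bound[where B="B^2"])
      show "finite_measure (\<mu> \<Otimes>\<^sub>M \<nu>)" using fm by (intro finite_measure_pair_measure)
      show "AE p in \<mu> \<Otimes>\<^sub>M \<nu>. norm ((cmod (k p))^2) \<le> B^2"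
        using bnd by (auto intro!: power_mono)
      show "(\<lambda>p. (cmod (k p))^2) \<in> borel_measurable (\<mu> \<Otimes>\<^sub>M \<nu>)" by (intro borel_measurable_power) (rule measurable_compose[OF kmeas borel_measurable_norm])
    qed
    thus ?thesis using kmeas by (simp add: L2_def)
  qed
  have kop: "opnorm \<mu> \<nu> k \<le> 1"
    unfolding opnorm_def
  proof (rule SUP_least)
    fix g assume g: "g \<in> {g \<in> L2 \<nu>. L2norm \<nu> g \<le> 1}"
    hence gm: "g \<in> borel_measurable (restrict_space borel {a..b})"
      by (simp add: L2_def \<nu>_def meas_dm_iff)
    have int: "intop \<nu> k g = (\<lambda>s. \<Sum>j<M. k (s, y j) * g (y j))"
    proof
      fix s show "intop \<nu> k g s = (\<Sum>j<M. k (s, y j) * g (y j))"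
        unfolding \<nu>_def by (rule intop_dm[OF ys(1)]) (unfold k_def, intro borel_measurable_times gm rb[OF kk_meas2])
    qed
    have "L2norm \<mu> (intop \<nu> k g) = sqrt (\<Sum>i<N. (cmod (\<Sum>j<M. K i j * g (y j)))^2)"
    proof -
      have "L2norm \<mu> (intop \<nu> k g) = sqrt (\<Sum>i<N. (cmod (\<Sum>j<M. k (x i, y j) * g (y j)))^2)"
        unfolding int \<mu>_def
        by (rule L2norm_dm[OF xs(1)]) (unfold k_def, intro borel_measurable_sum borel_measurable_times borel_measurable_const rb[OF kk_meas1])
      also have "\<dots> = sqrt (\<Sum>i<N. (cmod (\<Sum>j<M. K i j * g (y j)))^2)"
        unfolding k_def using kk_eval[OF xs(2) ys(2)] by simp
      finally show ?thesis .
    qed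
    also have "\<dots> \<le> sqrt (\<Sum>j<M. (cmod (g (y j)))^2)"
      using Kb[of "\<lambda>j. g (y j)"] by simp
    also have "\<dots> = L2norm \<nu> g"
      unfolding \<nu>_def by (rule L2norm_dm[OF ys(1) gm, symmetric])
    also have "\<dots> \<le> 1" using g by simp
    finally show "ereal (L2norm \<mu> (intop \<nu> k g)) \<le> 1" by simp
  qed
  define g0 :: "real \<Rightarrow> complex" where "g0 = (\<lambda>_. c)"
  have g0m: "g0 \<in> borel_measurable (restrict_space borel {a..b})" unfolding g0_def by simp
  have g0L2: "g0 \<in> {g \<in> L2 \<nu>. L2norm \<nu> g \<le> 1}"
  proof -
    have "g0 \<in> L2 \<nu>" unfolding L2_def g0_def using fm(2)
      by (auto intro!: finite_measure.integrable_const)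
    moreover have "L2norm \<nu> g0 = sqrt (real M * (cmod c)^2)"
      unfolding \<nu>_def by (subst L2norm_dm[OF ys(1) g0m]) (simp add: g0_def)
    ultimately show ?thesis using c by auto
  qed
  have int2: "intop \<nu> (\<lambda>p. phi p * k p) g0 = (\<lambda>s. \<Sum>j<M. phi (s, y j) * k (s, y j) * c)"
  proof
    fix s show "intop \<nu> (\<lambda>p. phi p * k p) g0 s = (\<Sum>j<M. phi (s, y j) * k (s, y j) * c)"
      unfolding \<nu>_def by (subst intop_dm[OF ys(1)]) 
        (unfold k_def g0_def, intro borel_measurable_times borel_measurable_const rb[OF kk_meas2] rb[OF phi_meas2], simp add: g0_def)
  qed
  have "L2norm \<mu> (intop \<nu> (\<lambda>p. phi p * k p) g0) = sqrt (\<Sum>i<N. (cmod (\<Sum>j<M. phi (x i, y j) * K i j * c))^2)"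
  proof -
    have "L2norm \<mu> (intop \<nu> (\<lambda>p. phi p * k p) g0) = sqrt (\<Sum>i<N. (cmod (\<Sum>j<M. phi (x i, y j) * k (x i, y j) * c))^2)"
      unfolding int2 \<mu>_def
      by (rule L2norm_dm[OF xs(1)]) (unfold k_def, intro borel_measurable_sum borel_measurable_times borel_measurable_const rb[OF kk_meas1] rb[OF phi_meas1])
    also have "\<dots> = sqrt (\<Sum>i<N. (cmod (\<Sum>j<M. phi (x i, y j) * K i j * c))^2)"
      unfolding k_def using kk_eval[OF xs(2) ys(2)] by simp
    finally show ?thesis .
  qed
  hence "ereal (sqrt (\<Sum>i<N. (cmod (\<Sum>j<M. phi (x i, y j) * K i j * c))^2)) \<le> opnorm \<mu> \<nu> (\<lambda>p. phi p * k p)"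
    unfolding opnorm_def using g0L2 by (metis (no_types, lifting) SUP_upper)
  also have "\<dots> \<le> schur_norm {a..b} {a..b} phi"
    unfolding schur_norm_def
  proof -
    have mem: "(\<mu>, \<nu>, k) \<in> {(\<mu>, \<nu>, k). regular_borel_measure {a..b} \<mu> \<and> regular_borel_measure {a..b} \<nu> \<and>
                       k \<in> L2 (\<mu> \<Otimes>\<^sub>M \<nu>) \<and> opnorm \<mu> \<nu> k \<le> 1}"
      using regular_dm[OF xs(1)] regular_dm[OF ys(1)] kL2 kop unfolding \<mu>_def \<nu>_def by blast
    show "opnorm \<mu> \<nu> (\<lambda>p. phi p * k p) \<le> (SUP (\<mu>, \<nu>, k)\<in>{(\<mu>, \<nu>, k). regular_borel_measure {a..b} \<mu> \<and> regular_borel_measure {a..b} \<nu> \<and>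
                       k \<in> L2 (\<mu> \<Otimes>\<^sub>M \<nu>) \<and> opnorm \<mu> \<nu> k \<le> 1}. opnorm \<mu> \<nu> (\<lambda>p. phi p * k p))"
      using SUP_upper[OF mem, of "\<lambda>(\<mu>, \<nu>, k). opnorm \<mu> \<nu> (\<lambda>p. phi p * k p)"] by simp
  qed
  finally show ?thesis .
qed

definition ee :: "nat \<Rightarrow> nat \<Rightarrow> nat \<Rightarrow> complex" where
  "ee N l i = cis (2 * pi * real l * real i / real N)"

lemma ee_sym: "ee N l i = ee N i l"
  by (simp add: ee_def mult.commute mult.left_commute)

lemma cmod_ee[simp]: "cmod (ee N l i) = 1"
  by (simp add: ee_def)

lemma cis_ne_1:
  fixes d :: int and N :: nat
  assumes "N > 0" "\<bar>d\<bar> < int N" "d \<noteq> 0"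
  shows "cis (2 * pi * real_of_int d / real N) \<noteq> 1"
proof
  assume "cis (2 * pi * real_of_int d / real N) = 1"
  hence "exp (\<i> * complex_of_real (2 * pi * real_of_int d / real N)) = 1"
    by (simp add: cis_conv_exp)
  then obtain n :: int where n: "2 * pi * real_of_int d / real N = real_of_int (2 * n) * pi"
    by (auto simp: exp_eq_1)
  hence "real_of_int d = real_of_int n * real N" using assms(1) pi_gt_zero
    by (simp add: field_simps)
  hence dn: "d = n * int N" by (metis of_int_eq_iff of_int_mult of_int_of_nat_eq)
  show False
  proof (cases "n = 0")
    case True thus False using dn assms by simp
  next
    case False
    hence n1: "\<bar>n\<bar> \<ge> 1" by linarith
    have "\<bar>d\<bar> = \<bar>n\<bar> * int N" unfolding dn by (simp add: abs_mult)
    also have "\<dots> \<ge> 1 * int N" by (rule mult_right_mono[OF n1]) simp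
    finally have "\<bar>d\<bar> \<ge> int N" by simp
    thus False using assms by simp
  qed
qed

lemma orth:
  assumes "N > 0" "l < N" "l' < N"
  shows "(\<Sum>i<N. ee N l i * cnj (ee N l' i)) = (if l = l' then of_nat N else 0)"
proof -
  define d :: int where "d = int l - int l'"
  define z where "z = cis (2 * pi * real_of_int d / real N)"
  have trm: "ee N l i * cnj (ee N l' i) = z ^ i" for i
  proof -
    have "z ^ i = cis (real i * (2 * pi * real_of_int d / real N))" unfolding z_def by (rule Complex.DeMoivre)
    also have "\<dots> = ee N l i * cnj (ee N l' i)" unfolding ee_def cis_cnj cis_mult d_def
      by (rule arg_cong[where f=cis]) (use assms(1) in \<open>simp add: field_simps\<close>)
    finally show ?thesis by simp
  qed
  have zN: "z ^ N = 1"
  proof -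
    have "z ^ N = cis (real N * (2 * pi * real_of_int d / real N))" unfolding z_def by (rule Complex.DeMoivre)
    also have "real N * (2 * pi * real_of_int d / real N) = 2 * pi * real_of_int d" using assms(1) by simp
    also have "cis (2 * pi * real_of_int d) = 1" by (rule cis_multiple_2pi) simp
    finally show ?thesis .
  qed
  show ?thesis
  proof (cases "l = l'")
    case True thus ?thesis unfolding trm by (simp add: z_def d_def)
  next
    case False
    have "z \<noteq> 1" unfolding z_def using False assms by (intro cis_ne_1) (auto simp: d_def)
    thus ?thesis using False unfolding trm by (simp add: sum_gp_strict zN)
  qed
qed


lemma parseval:
  assumes "N > 0"
  shows "(\<Sum>i<N. (cmod (\<Sum>l<N. a l * ee N l i))^2) = real N * (\<Sum>l<N. (cmod (a l))^2)"
proof -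
  have "complex_of_real (\<Sum>i<N. (cmod (\<Sum>l<N. a l * ee N l i))^2)
      = (\<Sum>i<N. (\<Sum>l<N. a l * ee N l i) * cnj (\<Sum>l'<N. a l' * ee N l' i))"
    by (simp only: of_real_sum complex_norm_square)
  also have "\<dots> = (\<Sum>i<N. \<Sum>l<N. \<Sum>l'<N. (a l * cnj (a l')) * (ee N l i * cnj (ee N l' i)))"
    by (simp add: cnj_sum sum_product mult_ac)
  also have "\<dots> = (\<Sum>l<N. \<Sum>l'<N. \<Sum>i<N. (a l * cnj (a l')) * (ee N l i * cnj (ee N l' i)))"
    by (subst sum.swap, subst (2) sum.swap) (rule refl)
  also have "\<dots> = (\<Sum>l<N. \<Sum>l'<N. (a l * cnj (a l')) * (if l = l' then of_nat N else 0))"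
    by (intro sum.cong refl) (simp add: sum_distrib_left[symmetric] orth assms)
  also have "\<dots> = (\<Sum>l<N. (a l * cnj (a l)) * of_nat N)"
    by (intro sum.cong refl) (simp add: if_distrib cong: if_cong)
  also have "\<dots> = complex_of_real (real N * (\<Sum>l<N. (cmod (a l))^2))"
    by (simp only: of_real_mult of_real_sum complex_norm_square sum_distrib_left of_real_of_nat_eq) (simp add: mult_ac)
  finally show ?thesis by (simp only: of_real_eq_iff)
qed

lemma circ_bound:
  assumes N: "N > 0" and lam: "\<And>l. l < N \<Longrightarrow> cmod (lam l) \<le> 1"
  shows "(\<Sum>i<N. (cmod (\<Sum>j<N. ((1 / of_nat N) * (\<Sum>l<N. lam l * ee N l i * cnj (ee N l j))) * g j))^2)
       \<le> (\<Sum>j<N. (cmod (g j))^2)"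
proof -
  define G where "G l = (\<Sum>j<N. cnj (ee N l j) * g j)" for l
  have row: "(\<Sum>j<N. ((1 / of_nat N) * (\<Sum>l<N. lam l * ee N l i * cnj (ee N l j))) * g j)
      = (\<Sum>l<N. (lam l * G l / of_nat N) * ee N l i)" for i
    unfolding G_def
    by (simp add: sum_distrib_left sum_distrib_right sum_divide_distrib mult_ac) (subst sum.swap, rule refl)
  have "(\<Sum>i<N. (cmod (\<Sum>j<N. ((1 / of_nat N) * (\<Sum>l<N. lam l * ee N l i * cnj (ee N l j))) * g j))^2)
      = real N * (\<Sum>l<N. (cmod (lam l * G l / of_nat N))^2)"
    unfolding row by (rule parseval[OF N])
  also have "\<dots> \<le> real N * (\<Sum>l<N. (cmod (G l))^2 / (real N)^2)"
  proof (intro mult_left_mono sum_mono)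
    fix l assume "l \<in> {..<N}"
    hence "cmod (lam l) \<le> 1" using lam by simp
    hence "cmod (lam l * G l) \<le> cmod (G l)" by (simp add: norm_mult mult_left_le_one_le)
    hence "(cmod (lam l * G l))^2 \<le> (cmod (G l))^2" by (intro power_mono) auto
    thus "(cmod (lam l * G l / of_nat N))^2 \<le> (cmod (G l))^2 / (real N)^2"
      by (simp add: norm_divide power_divide divide_right_mono)
  qed simp
  also have "\<dots> = (\<Sum>l<N. (cmod (G l))^2) / real N"
    using N by (simp add: sum_divide_distrib[symmetric] power2_eq_square)
  also have "(\<Sum>l<N. (cmod (G l))^2) = (\<Sum>l<N. (cmod (\<Sum>j<N. cnj (g j) * ee N j l))^2)"
  proof (intro sum.cong refl)
    fix l
    have "cmod (G l) = cmod (cnj (G l))" by simp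
    also have "cnj (G l) = (\<Sum>j<N. cnj (g j) * ee N j l)"
      unfolding G_def by (simp add: cnj_sum ee_sym mult.commute)
    finally show "(cmod (G l))^2 = (cmod (\<Sum>j<N. cnj (g j) * ee N j l))^2" by simp
  qed
  also have "\<dots> = real N * (\<Sum>j<N. (cmod (g j))^2)"
    by (subst parseval[OF N]) simp
  finally show ?thesis using N by simp
qed

lemma Srec: "(\<Sum>j<Suc i. (z::'a::comm_ring_1)^(Suc i - j)) = z * (\<Sum>j<i. z^(i-j)) + z"
proof -
  have "(\<Sum>j<i. z^(Suc i - j)) = (\<Sum>j<i. z * z^(i-j))"
    by (intro sum.cong refl) (simp add: Suc_diff_le)
  thus ?thesis by (simp add: sum_distrib_left)
qed

lemma Sclosed: "(1 - (z::'a::comm_ring_1)) * (\<Sum>j<i. z^(i-j)) = z - z^(Suc i)"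
proof (induction i)
  case 0 thus ?case by simp
next
  case (Suc i)
  have "(1 - z) * (\<Sum>j<Suc i. z^(Suc i - j)) = z * ((1 - z) * (\<Sum>j<i. z^(i-j))) + (1 - z) * z"
    unfolding Srec by (simp add: algebra_simps)
  also have "\<dots> = z - z ^ Suc (Suc i)" unfolding Suc.IH by (simp add: algebra_simps)
  finally show ?case .
qed

lemma Sreal:
  assumes "0 \<le> q" "q < (1::real)"
  shows "(\<Sum>j<i. q^(i-j)) \<le> q / (1 - q)"
proof -
  have "(1 - q) * (\<Sum>j<i. q^(i-j)) \<le> q" unfolding Sclosed using assms by simp
  thus ?thesis using assms by (simp add: field_simps)
qed

lemma ee_pow: "ee N l i = (ee N l 1) ^ i"
  unfolding ee_def by (subst Complex.DeMoivre) (simp add: mult_ac)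

lemma ee_prod:
  assumes "j \<le> i"
  shows "ee N l i * cnj (ee N l j) = (ee N l 1) ^ (i - j)"
proof -
  define w where "w = ee N l 1"
  have w1: "w * cnj w = 1" unfolding w_def by (simp flip: complex_norm_square)
  have "ee N l i * cnj (ee N l j) = w^(i-j) * (w ^ j * cnj w ^ j)"
    by (subst (1 2) ee_pow) (simp add: w_def assms power_add[symmetric] mult_ac flip: power_add)
  also have "w ^ j * cnj w ^ j = 1" by (simp add: w1 flip: power_mult_distrib)
  finally show ?thesis by (simp add: w_def)
qed

definition AA :: "nat \<Rightarrow> nat \<Rightarrow> complex" where
  "AA N l = (\<Sum>i<N. \<Sum>j<N. if j < i then ee N l i * cnj (ee N l j) else 0)"

lemma AA_eq:
  assumes "0 < l" "l < N"
  shows "(1 - ee N l 1) * AA N l = of_nat N * ee N l 1"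
proof -
  define w where "w = ee N l 1"
  have "AA N l = (\<Sum>i<N. \<Sum>j<i. w ^ (i - j))"
    unfolding AA_def w_def
  proof (rule sum.cong[OF refl])
    fix i assume "i \<in> {..<N}"
    hence "{..<i} = {j \<in> {..<N}. j < i}" by auto
    thus "(\<Sum>j<N. if j < i then ee N l i * cnj (ee N l j) else 0) = (\<Sum>j<i. ee N l 1 ^ (i - j))"
      by (simp add: sum.inter_filter[symmetric] ee_prod)
  qed
  hence "(1 - w) * AA N l = (\<Sum>i<N. (1 - w) * (\<Sum>j<i. w ^ (i - j)))"
    by (simp only:) (rule sum_distrib_left)
  also have "\<dots> = (\<Sum>i<N. w - w ^ Suc i)"
    by (simp only: Sclosed)
  also have "\<dots> = of_nat N * w - w * (\<Sum>i<N. w ^ i)"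
    by (simp add: sum_subtractf sum_distrib_left)
  also have "(\<Sum>i<N. w ^ i) = (\<Sum>i<N. ee N l i * cnj (ee N 0 i))"
  proof (intro sum.cong refl)
    fix i
    have e0: "ee N 0 i = 1" by (simp add: ee_def)
    have wi: "w ^ i = ee N l i" unfolding w_def by (rule ee_pow[symmetric])
    show "w ^ i = ee N l i * cnj (ee N 0 i)" by (simp add: wi e0)
  qed
  also have "\<dots> = 0" using orth[of N l 0] assms by simp
  finally show ?thesis by (simp add: w_def)
qed


lemma Im_AA:
  assumes "0 < l" "l < N"
  shows "Im (AA N l) = real N * sin (2 * pi * real l / real N) / (2 - 2 * cos (2 * pi * real l / real N))"
proof -
  define th where "th = 2 * pi * real l / real N"
  define w where "w = ee N l 1"
  have w: "w = cis th" by (simp add: w_def th_def ee_def)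
  have "w \<noteq> 1" unfolding w th_def using cis_ne_1[of N "int l"] assms by simp
  hence w1: "1 - w \<noteq> 0" by simp
  have A: "AA N l = of_nat N * w / (1 - w)"
    using AA_eq[OF assms] w1 by (simp add: w_def field_simps)
  have den: "(Re (1 - w))^2 + (Im (1 - w))^2 = 2 - 2 * cos th"
    unfolding w by (simp add: power2_eq_square algebra_simps)
  have "Im (AA N l) = (Im (of_nat N * w) * Re (1 - w) - Re (of_nat N * w) * Im (1 - w)) / (2 - 2 * cos th)"
    unfolding A Im_divide den ..
  also have "\<dots> = real N * sin th / (2 - 2 * cos th)"
    unfolding w by (simp add: algebra_simps)
  finally show ?thesis by (simp add: th_def)
qed

lemma cos_lower: "1 - s^2 / 2 \<le> cos (s::real)"
proof -
  have "cos s = cos (2 * (s/2))" by simp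
  also have "\<dots> = 1 - 2 * (sin (s/2))^2" by (rule cos_double_sin)
  finally have c: "cos s = 1 - 2 * (sin (s/2))^2" .
  have "(sin (s/2))^2 \<le> (s/2)^2"
    using abs_sin_x_le_abs_x[of "s/2"] by (metis abs_le_square_iff)
  thus ?thesis unfolding c by (simp add: power_divide)
qed

lemma Ps_lower:
  assumes "0 < l" "2 * l \<le> N"
  shows "cmod (AA N l - cnj (AA N l)) \<ge> real N * (real N / (pi * real l) - pi * real l / (2 * real N))"
proof -
  have lN: "l < N" using assms by simp
  define s where "s = pi * real l / real N"
  have s0: "0 < s" using assms lN by (simp add: s_def)
  have s2: "s \<le> pi / 2" using assms by (simp add: s_def field_simps)
  have sins: "0 < sin s" using s0 s2 by (intro sin_gt_zero) (auto simp: pi_gt_zero)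
  have coss: "0 \<le> cos s" using s0 s2 by (intro cos_ge_zero) auto
  have th: "2 * pi * real l / real N = 2 * s" by (simp add: s_def)
  have "Im (AA N l) = real N * (2 * sin s * cos s) / (4 * (sin s)^2)"
    unfolding Im_AA[OF assms(1) lN] th sin_double cos_double_sin by simp
  also have "\<dots> = real N * cos s / (2 * sin s)"
    using sins by (simp add: power2_eq_square field_simps)
  finally have ImA: "Im (AA N l) = real N * cos s / (2 * sin s)" .
  have "cmod (AA N l - cnj (AA N l)) = 2 * \<bar>Im (AA N l)\<bar>"
    by (simp add: complex_diff_cnj norm_mult)
  also have "\<dots> = real N * (cos s / sin s)"
    unfolding ImA using sins coss by (simp add: abs_mult)
  also have "cos s / sin s \<ge> cos s / s"
    using sins coss sin_x_le_x[of s] s0 by (intro divide_left_mono) auto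
  hence "real N * (cos s / sin s) \<ge> real N * (cos s / s)" by (intro mult_left_mono) auto
  also have "cos s / s \<ge> (1 - s^2/2) / s" using cos_lower[of s] s0 by (intro divide_right_mono) auto
  hence "real N * (cos s / s) \<ge> real N * ((1 - s^2/2) / s)" by (intro mult_left_mono) auto
  also have "(1 - s^2/2) / s = real N / (pi * real l) - pi * real l / (2 * real N)"
    using s0 lN assms by (simp add: s_def field_simps power2_eq_square)
  finally show ?thesis by simp
qed


definition sg :: "nat \<Rightarrow> nat \<Rightarrow> complex" where
  "sg i j = (if j < i then 1 else if i < j then -1 else 0)"

lemma sig_decomp:
  "(\<Sum>i<N. \<Sum>j<N. sg i j * (ee N l i * cnj (ee N l j))) = AA N l - cnj (AA N l)"
proof -
  define f where "f i j = ee N l i * cnj (ee N l j)" for i j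
  have "(\<Sum>i<N. \<Sum>j<N. sg i j * f i j)
      = (\<Sum>i<N. \<Sum>j<N. (if j < i then f i j else 0)) - (\<Sum>i<N. \<Sum>j<N. (if i < j then f i j else 0))"
    by (simp add: sum_subtractf[symmetric] sg_def) (intro sum.cong refl, auto)
  also have "(\<Sum>i<N. \<Sum>j<N. (if i < j then f i j else 0)) = (\<Sum>j<N. \<Sum>i<N. (if i < j then f i j else 0))"
    by (rule sum.swap)
  also have "\<dots> = cnj (\<Sum>j<N. \<Sum>i<N. (if i < j then f j i else 0))"
    by (simp add: cnj_sum f_def if_distrib mult.commute cong: if_cong)
  finally show ?thesis by (simp add: AA_def f_def cnj_sum if_distrib cong: if_cong)
qed

definition qq :: real where "qq = exp (-4)"

lemma qq_pos: "0 < qq" and qq_less: "qq < 1"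
  by (auto simp: qq_def)

definition DD :: "nat \<Rightarrow> nat \<Rightarrow> real" where
  "DD i j = (if j < i then 2 * qq^(i-j) else if i < j then 2 * qq^(j-i) else 0)"

lemma phi_err_aux:
  fixes u v :: real
  assumes "v < u"
  shows "1 - (exp u - exp v) / (exp u + exp v) \<le> 2 * exp (v - u)"
proof -
  have p: "0 < exp u + exp v" by (simp add: add_pos_pos)
  have "1 - (exp u - exp v) / (exp u + exp v) = 2 * exp v / (exp u + exp v)"
    using p by (simp add: field_simps)
  also have "\<dots> \<le> 2 * exp v / exp u" by (rule divide_left_mono) (auto intro!: mult_pos_pos add_pos_pos)
  also have "\<dots> = 2 * exp (v - u)" by (simp add: exp_diff)
  finally show ?thesis .
qed

lemma phi_err:
  fixes a :: real
  shows "cmod (phi (a + 4 * real i, a + 4 * real j) - sg i j) \<le> DD i j"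
proof -
  have pw: "exp (- 4 * real n) = qq ^ n" for n :: nat
    unfolding qq_def by (subst exp_of_nat_mult[symmetric]) (simp add: mult_ac)
  consider "j < i" | "i < j" | "i = j" by linarith
  thus ?thesis
  proof cases
    case 1
    let ?u = "a + 4 * real i" and ?v = "a + 4 * real j"
    have lt: "?v < ?u" using 1 by simp
    have r: "(exp ?u - exp ?v) / (exp ?u + exp ?v) \<le> 1"
      by (simp add: divide_le_eq_1 add_pos_pos)
    have "phi (?u, ?v) - sg i j = complex_of_real ((exp ?u - exp ?v) / (exp ?u + exp ?v) - 1)"
      using 1 by (simp add: phi_def sg_def)
    hence "cmod (phi (?u, ?v) - sg i j) = 1 - (exp ?u - exp ?v) / (exp ?u + exp ?v)"
      using r by (simp only: norm_of_real)
    also have "\<dots> \<le> 2 * exp (?v - ?u)" by (rule phi_err_aux[OF lt])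
    also have "exp (?v - ?u) = qq ^ (i - j)" using 1 pw[of "i - j"] by (simp add: of_nat_diff algebra_simps)
    finally show ?thesis using 1 by (simp add: DD_def)
  next
    case 2
    let ?u = "a + 4 * real j" and ?v = "a + 4 * real i"
    have lt: "?v < ?u" using 2 by simp
    have r: "(exp ?u - exp ?v) / (exp ?u + exp ?v) \<le> 1"
      by (simp add: divide_le_eq_1 add_pos_pos)
    have e: "(exp ?v - exp ?u) / (exp ?v + exp ?u) = - ((exp ?u - exp ?v) / (exp ?u + exp ?v))"
      unfolding add.commute[of "exp ?v" "exp ?u"] minus_divide_left by simp
    have ph: "phi (?v, ?u) = complex_of_real (- ((exp ?u - exp ?v) / (exp ?u + exp ?v)))"
      by (simp only: phi_def case_prod_conv e)
    have "phi (?v, ?u) - sg i j = complex_of_real (1 - (exp ?u - exp ?v) / (exp ?u + exp ?v))"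
      using 2 unfolding ph by (simp add: sg_def)
    hence "cmod (phi (?v, ?u) - sg i j) = 1 - (exp ?u - exp ?v) / (exp ?u + exp ?v)"
      using r by (simp only: norm_of_real)
    also have "\<dots> \<le> 2 * exp (?v - ?u)" by (rule phi_err_aux[OF lt])
    also have "exp (?v - ?u) = qq ^ (j - i)" using 2 pw[of "j - i"] by (simp add: of_nat_diff algebra_simps)
    finally show ?thesis using 2 by (simp add: DD_def)
  next
    case 3 thus ?thesis by (simp add: phi_def sg_def DD_def)
  qed
qed


lemma DD_sum: "(\<Sum>i<N. \<Sum>j<N. DD i j) \<le> 4 * real N * qq / (1 - qq)"
proof -
  define F where "F i j = (if j < i then 2 * qq^(i-j) else 0)" for i j
  have "(\<Sum>i<N. \<Sum>j<N. DD i j) = (\<Sum>i<N. \<Sum>j<N. F i j) + (\<Sum>i<N. \<Sum>j<N. F j i)"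
    by (simp add: sum.distrib[symmetric] F_def DD_def) (intro sum.cong refl, auto)
  also have "(\<Sum>i<N. \<Sum>j<N. F j i) = (\<Sum>i<N. \<Sum>j<N. F i j)" by (rule sum.swap)
  also have "(\<Sum>i<N. \<Sum>j<N. F i j) \<le> (\<Sum>i<N. 2 * qq / (1 - qq))"
  proof (rule sum_mono)
    fix i assume i: "i \<in> {..<N}"
    hence "{..<i} = {j \<in> {..<N}. j < i}" by auto
    hence "(\<Sum>j<N. F i j) = (\<Sum>j<i. 2 * qq^(i-j))"
      by (simp add: F_def sum.inter_filter[symmetric])
    also have "\<dots> = 2 * (\<Sum>j<i. qq^(i-j))" by (simp add: sum_distrib_left)
    also have "\<dots> \<le> 2 * (qq / (1 - qq))" using Sreal[OF less_imp_le[OF qq_pos] qq_less, of i] by (intro mult_left_mono) auto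
    finally show "(\<Sum>j<N. F i j) \<le> 2 * qq / (1 - qq)" by simp
  qed
  finally show ?thesis by (simp add: mult_ac)
qed

definition PP :: "real \<Rightarrow> nat \<Rightarrow> nat \<Rightarrow> complex" where
  "PP a N l = (\<Sum>i<N. \<Sum>j<N. phi (a + 4 * real i, a + 4 * real j) * (ee N l i * cnj (ee N l j)))"

lemma PP_lower:
  assumes "0 < l" "2 * l \<le> N"
  shows "cmod (PP a N l) \<ge> real N * (real N / (pi * real l) - pi * real l / (2 * real N)) - 4 * real N * qq / (1 - qq)"
proof -
  define E where "E = (\<Sum>i<N. \<Sum>j<N. (phi (a + 4 * real i, a + 4 * real j) - sg i j) * (ee N l i * cnj (ee N l j)))"
  have dec: "PP a N l = (AA N l - cnj (AA N l)) + E"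
    unfolding PP_def E_def sig_decomp[symmetric] by (simp add: sum.distrib[symmetric] algebra_simps)
  have "cmod E \<le> (\<Sum>i<N. \<Sum>j<N. DD i j)"
    unfolding E_def
    by (rule order.trans[OF norm_sum sum_mono], rule order.trans[OF norm_sum sum_mono])
       (simp add: norm_mult phi_err)
  also have "\<dots> \<le> 4 * real N * qq / (1 - qq)" by (rule DD_sum)
  finally have Eb: "cmod E \<le> 4 * real N * qq / (1 - qq)" .
  have "cmod (AA N l - cnj (AA N l)) - cmod E \<le> cmod (PP a N l)"
    unfolding dec by (metis norm_diff_ineq diff_minus_eq_add)
  thus ?thesis using Ps_lower[OF assms] Eb by linarith
qed


lemma sum_PP_lower:
  assumes N: "2 \<le> N"
  shows "(\<Sum>l<N. cmod (PP a N l)) / (real N)^2 \<ge> ln (real (N div 2) + 1) / pi - pi / 8 - 2 * qq / (1 - qq)"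
proof -
  define K where "K = N div 2"
  define C where "C = 4 * real N * qq / (1 - qq)"
  have K2: "2 * K \<le> N" by (simp add: K_def)
  have KN: "K < N" using N by (simp add: K_def)
  have "(\<Sum>l\<in>{1..K}. cmod (PP a N l)) \<le> (\<Sum>l<N. cmod (PP a N l))"
    using KN by (intro sum_mono2) auto
  moreover have "(\<Sum>l\<in>{1..K}. real N * (real N / (pi * real l) - pi * real l / (2 * real N)) - C)
      \<le> (\<Sum>l\<in>{1..K}. cmod (PP a N l))"
    unfolding C_def using K2 by (intro sum_mono PP_lower) auto
  moreover have "(\<Sum>l\<in>{1..K}. real N * (real N / (pi * real l) - pi * real l / (2 * real N)) - C)
      = (real N)^2 / pi * harm K - pi / 2 * (\<Sum>l\<in>{1..K}. real l) - real K * C"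
  proof -
    have "(\<Sum>l\<in>{1..K}. real N * (real N / (pi * real l) - pi * real l / (2 * real N)) - C)
       = (\<Sum>l\<in>{1..K}. (real N)^2 / pi * inverse (real l) - pi / 2 * real l - C)"
      using N by (intro sum.cong refl) (simp add: field_simps power2_eq_square)
    also have "\<dots> = (real N)^2 / pi * (\<Sum>l\<in>{1..K}. inverse (real l)) - pi / 2 * (\<Sum>l\<in>{1..K}. real l) - real K * C"
      by (simp add: sum_subtractf sum_distrib_left)
    finally show ?thesis by (simp add: harm_def)
  qed
  moreover have "(\<Sum>l\<in>{1..K}. real l) = real K * (real K + 1) / 2"
    by (induction K) (auto simp: field_simps)
  hence "pi / 2 * (\<Sum>l\<in>{1..K}. real l) = pi / 4 * (real K * (real K + 1))" by simp
  ultimately have main: "(real N)^2 / pi * harm K - pi / 4 * (real K * (real K + 1)) - real K * C \<le> (\<Sum>l<N. cmod (PP a N l))"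
    by linarith
  have hK: "ln (real K + 1) \<le> harm K" by (rule harm_ge_ln)
  have KK: "real K * (real K + 1) \<le> (real N)^2 / 2"
  proof -
    have "2 * real K \<le> real N" using K2 by linarith
    moreover have "2 \<le> real N" using N by simp
    ultimately have "(2 * real K) * (2 * real K + 2) \<le> real N * (real N + real N)"
      by (intro mult_mono) auto
    thus ?thesis by (simp add: power2_eq_square algebra_simps)
  qed
  have KC: "real K * C \<le> (real N)^2 * (2 * qq / (1 - qq))"
  proof -
    have q: "0 \<le> qq / (1 - qq)" using qq_pos qq_less by simp
    have "real K * C = (2 * real K) * real N * 2 * (qq / (1 - qq))" by (simp add: C_def)
    also have "\<dots> \<le> real N * real N * 2 * (qq / (1 - qq))"
      using K2 q by (intro mult_right_mono) auto
    finally show ?thesis by (simp add: power2_eq_square mult_ac)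
  qed
  have Npos: "0 < (real N)^2" using N by simp
  have "(real N)^2 * (ln (real K + 1) / pi - pi / 8 - 2 * qq / (1 - qq))
      \<le> (real N)^2 / pi * harm K - pi / 4 * (real K * (real K + 1)) - real K * C"
  proof -
    have a1: "(real N)^2 * (ln (real K + 1) / pi) \<le> (real N)^2 / pi * harm K"
      using hK by (simp add: divide_right_mono mult_right_mono field_simps pi_gt_zero)
    have a2: "pi / 4 * (real K * (real K + 1)) \<le> (real N)^2 * (pi / 8)"
    proof -
      have "pi / 4 * (real K * (real K + 1)) \<le> pi / 4 * ((real N)^2 / 2)"
        using KK pi_gt_zero by (intro mult_left_mono) auto
      thus ?thesis by simp
    qed
    show ?thesis using a1 a2 KC by (simp add: algebra_simps)
  qed
  with main have "(real N)^2 * (ln (real K + 1) / pi - pi / 8 - 2 * qq / (1 - qq)) \<le> (\<Sum>l<N. cmod (PP a N l))"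
    by linarith
  thus ?thesis using Npos unfolding K_def by (simp add: field_simps)
qed

lemma lam_P:
  fixes P :: complex
  shows "(if P = 0 then 0 else cnj P / of_real (cmod P)) * P = of_real (cmod P)"
  by (cases "P = 0") (simp_all add: field_simps complex_norm_square[symmetric] power2_eq_square)

lemma circ_schur:
  assumes N: "2 \<le> N" and len: "4 * (real N - 1) \<le> b - a"
  shows "ereal ((\<Sum>l<N. cmod (PP a N l)) / (real N)^2) \<le> schur_norm {a..b} {a..b} phi"
proof -
  define x where "x i = a + 4 * real i" for i
  define lam where "lam l = (if PP a N l = 0 then 0 else cnj (PP a N l) / of_real (cmod (PP a N l)))" for l
  define K where "K i j = (1 / of_nat N) * (\<Sum>l<N. lam l * ee N l i * cnj (ee N l j))" for i j
  define c :: complex where "c = of_real (1 / sqrt (real N))"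
  have N0: "0 < N" using N by simp
  have xs: "x ` {..<N} \<subseteq> {a..b}"
  proof
    fix t assume "t \<in> x ` {..<N}"
    then obtain i where i: "i < N" "t = x i" by auto
    have "real i \<le> real N - 1" using i by linarith
    thus "t \<in> {a..b}" using i len by (auto simp: x_def)
  qed
  have xi: "inj_on x {..<N}" by (auto simp: inj_on_def x_def)
  have lam1: "cmod (lam l) \<le> 1" for l
    by (simp add: lam_def norm_divide)
  have Kb: "(\<Sum>i<N. (cmod (\<Sum>j<N. K i j * g j))^2) \<le> (\<Sum>j<N. (cmod (g j))^2)" for g
    unfolding K_def by (rule circ_bound[OF N0]) (use lam1 in auto)
  have cc: "real N * (cmod c)^2 \<le> 1" using N0 by (simp add: c_def power_divide norm_divide)
  have SL: "ereal (sqrt (\<Sum>i<N. (cmod (\<Sum>j<N. phi (x i, x j) * K i j * c))^2)) \<le> schur_norm {a..b} {a..b} phi"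
    by (rule schur_lower[OF xs xi xs xi Kb cc])
  define h where "h i = (\<Sum>j<N. phi (x i, x j) * K i j * c)" for i
  have sumh: "(\<Sum>i<N. h i) = c * (1 / of_nat N) * of_real (\<Sum>l<N. cmod (PP a N l))"
  proof -
    have "(\<Sum>i<N. h i) = c * (1 / of_nat N) * (\<Sum>i<N. \<Sum>j<N. \<Sum>l<N. lam l * (phi (x i, x j) * (ee N l i * cnj (ee N l j))))"
      unfolding h_def K_def by (simp add: sum_distrib_left sum_distrib_right mult_ac)
    also have "(\<Sum>i<N. \<Sum>j<N. \<Sum>l<N. lam l * (phi (x i, x j) * (ee N l i * cnj (ee N l j))))
        = (\<Sum>l<N. \<Sum>i<N. \<Sum>j<N. lam l * (phi (x i, x j) * (ee N l i * cnj (ee N l j))))"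
      by (subst (2) sum.swap) (subst sum.swap, rule refl)
    also have "\<dots> = (\<Sum>l<N. lam l * PP a N l)"
      by (simp add: PP_def x_def sum_distrib_left)
    also have "\<dots> = (\<Sum>l<N. of_real (cmod (PP a N l)))"
      unfolding lam_def by (simp only: lam_P)
    finally show ?thesis by simp
  qed
  have cmh: "cmod (\<Sum>i<N. h i) = (1 / sqrt (real N)) * (1 / real N) * (\<Sum>l<N. cmod (PP a N l))"
    unfolding sumh c_def by (simp add: norm_mult norm_divide sum_nonneg del: of_real_sum)
  have "(\<Sum>i<N. cmod (h i))^2 \<le> (\<Sum>i<N. (cmod (h i))^2) * real N"
    using sum_squared_le_sum_of_squares[of "\<lambda>i. cmod (h i)" "{..<N}"] by simp
  moreover have "cmod (\<Sum>i<N. h i) \<le> (\<Sum>i<N. cmod (h i))" by (rule norm_sum)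
  hence "(cmod (\<Sum>i<N. h i))^2 \<le> (\<Sum>i<N. cmod (h i))^2" by (intro power_mono) auto
  ultimately have "(cmod (\<Sum>i<N. h i))^2 / real N \<le> (\<Sum>i<N. (cmod (h i))^2)"
    using N0 by (simp add: divide_le_eq)
  hence "sqrt ((cmod (\<Sum>i<N. h i))^2 / real N) \<le> sqrt (\<Sum>i<N. (cmod (h i))^2)"
    by (rule real_sqrt_le_mono)
  moreover have "sqrt ((cmod (\<Sum>i<N. h i))^2 / real N) = (\<Sum>l<N. cmod (PP a N l)) / (real N)^2"
  proof -
    have "sqrt ((cmod (\<Sum>i<N. h i))^2 / real N) = cmod (\<Sum>i<N. h i) / sqrt (real N)"
      by (simp add: real_sqrt_divide)
    also have "\<dots> = (\<Sum>l<N. cmod (PP a N l)) / (real N)^2"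
      unfolding cmh using N0 by (simp add: field_simps power2_eq_square)
    finally show ?thesis .
  qed
  ultimately have "(\<Sum>l<N. cmod (PP a N l)) / (real N)^2 \<le> sqrt (\<Sum>i<N. (cmod (h i))^2)" by simp
  hence "ereal ((\<Sum>l<N. cmod (PP a N l)) / (real N)^2) \<le> ereal (sqrt (\<Sum>i<N. (cmod (h i))^2))" by simp
  also have "\<dots> \<le> schur_norm {a..b} {a..b} phi" using SL by (simp add: h_def)
  finally show ?thesis .
qed

lemma ln8: "ln (8::real) \<le> 2.4"
proof -
  have "1 + 1.2 + 1.2^2/2 \<le> exp (1.2::real)" by (rule exp_lower_Taylor_quadratic) simp
  hence e: "2.92 \<le> exp (1.2::real)" by (simp add: power2_eq_square)
  have "exp (2.4::real) = exp 1.2 * exp 1.2" by (simp flip: exp_add)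
  also have "\<dots> \<ge> 2.92 * 2.92" using e by (intro mult_mono) auto
  finally have "8 \<le> exp (2.4::real)" by simp
  hence "ln 8 \<le> ln (exp (2.4::real))" by (subst ln_le_cancel_iff) auto
  thus ?thesis by simp
qed

lemma qq_bound: "2 * qq / (1 - qq) \<le> 1 / 12"
proof -
  have "1 + 2 + 2^2/2 \<le> exp (2::real)" by (rule exp_lower_Taylor_quadratic) simp
  hence e2: "5 \<le> exp (2::real)" by simp
  have "exp (4::real) = exp 2 * exp 2" by (simp flip: exp_add)
  also have "\<dots> \<ge> 5 * 5" using e2 by (intro mult_mono) auto
  finally have e4: "25 \<le> exp (4::real)" by simp
  have ne: "exp (4::real) - 1 \<noteq> 0" "exp (4::real) \<noteq> 0" using e4 by auto
  have "2 * qq / (1 - qq) = 2 / (exp 4 - 1)" unfolding qq_def exp_minus using ne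
    by (simp add: field_simps)
  also have "\<dots> \<le> 2 / 24" using e4 by (intro divide_left_mono) auto
  finally show ?thesis by simp
qed

lemma big_case:
  assumes ab: "a < b" and t7: "7 \<le> ln (b - a)"
  shows "ereal (1/9 * (1 + ln (b - a))) \<le> schur_norm {a..b} {a..b} phi"
proof -
  define L where "L = b - a"
  have L0: "0 < L" using ab by (simp add: L_def)
  define N where "N = nat \<lfloor>L / 4\<rfloor> + 1"
  have fl: "real (nat \<lfloor>L / 4\<rfloor>) = of_int \<lfloor>L / 4\<rfloor>" using L0 by simp
  have RN: "real N = of_int \<lfloor>L / 4\<rfloor> + 1" by (simp add: N_def fl)
  have f1: "of_int \<lfloor>L / 4\<rfloor> \<le> L / 4" by (rule of_int_floor_le)
  have f2: "L / 4 < of_int \<lfloor>L / 4\<rfloor> + 1" by (rule real_of_int_floor_add_one_gt)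
  have NL: "L / 4 < real N" using RN f2 by linarith
  have NL2: "4 * (real N - 1) \<le> L" unfolding RN using f1 by simp
  have "exp 7 \<le> L" using t7 L0 by (simp add: L_def ln_ge_iff)
  moreover have "exp (1::real) \<ge> 2" using exp_ge_add_one_self[of 1] by simp
  hence "exp (7::real) \<ge> 2^7" by (metis exp_of_nat_mult of_nat_numeral power_mono exp_ge_zero zero_le_numeral mult.right_neutral) 
  ultimately have L128: "128 \<le> L" by simp
  have N2: "2 \<le> N" using NL L128 by linarith
  have C: "ereal ((\<Sum>l<N. cmod (PP a N l)) / (real N)^2) \<le> schur_norm {a..b} {a..b} phi"
    by (rule circ_schur[OF N2]) (use NL2 in \<open>simp add: L_def\<close>)
  have S: "ln (real (N div 2) + 1) / pi - pi / 8 - 2 * qq / (1 - qq) \<le> (\<Sum>l<N. cmod (PP a N l)) / (real N)^2"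
    by (rule sum_PP_lower[OF N2])
  have h0: "N \<le> 2 * (N div 2) + 1" by presburger
  hence "real N \<le> real (2 * (N div 2) + 1)" by (simp only: of_nat_le_iff)
  hence "real (N div 2) \<ge> (real N - 1) / 2" by simp
  hence K8: "L / 8 \<le> real (N div 2) + 1" using NL by linarith
  have "ln (L / 8) \<le> ln (real (N div 2) + 1)" using K8 L0 by (subst ln_le_cancel_iff) auto
  moreover have "ln (L / 8) = ln L - ln 8" using L0 by (simp add: ln_div)
  ultimately have lnK: "ln L - 2.4 \<le> ln (real (N div 2) + 1)" using ln8 by linarith
  have tL: "7 \<le> ln L" using t7 by (simp add: L_def)
  have pi1: "pi \<le> 3.1416" using pi_approx(2) by simp
  have pi2: "3.14 \<le> pi" using pi_approx(1) by simp
  have "(ln L - 2.4) / 3.1416 \<le> (ln L - 2.4) / pi"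
    using tL pi1 pi_gt_zero by (intro divide_left_mono) auto
  also have "\<dots> \<le> ln (real (N div 2) + 1) / pi"
    using lnK pi_gt_zero by (intro divide_right_mono) auto
  finally have A: "(ln L - 2.4) / 3.1416 \<le> ln (real (N div 2) + 1) / pi" .
  have "1/9 * (1 + ln L) \<le> ln (real (N div 2) + 1) / pi - pi / 8 - 2 * qq / (1 - qq)"
    using A qq_bound pi1 tL by simp
  hence "ereal (1/9 * (1 + ln L)) \<le> ereal ((\<Sum>l<N. cmod (PP a N l)) / (real N)^2)" using S by simp
  also note C
  finally show ?thesis by (simp add: L_def)
qed

lemma small_case:
  assumes ab: "a < b"
  shows "ereal ((exp (b - a) - 1) / (exp (b - a) + 1)) \<le> schur_norm {a..b} {a..b} phi"
proof -
  have im: "(\<lambda>_. b) ` {..<Suc 0} \<subseteq> {a..b}" "(\<lambda>_. a) ` {..<Suc 0} \<subseteq> {a..b}" using ab by auto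
  have S: "ereal (cmod (phi (b, a))) \<le> schur_norm {a..b} {a..b} phi"
    using schur_lower[where x="\<lambda>_. b" and y="\<lambda>_. a" and N=1 and M=1 and K="\<lambda>_ _. 1" and c=1 and a=a and b=b] ab
    by (simp add: im inj_on_def)
  have "(exp b - exp a) / (exp b + exp a) = (exp (b - a) - 1) / (exp (b - a) + 1)"
  proof -
    have p: "0 < exp a" "0 < exp b" by auto
    have "(exp (b - a) - 1) / (exp (b - a) + 1) = ((exp b - exp a) / exp a) / ((exp b + exp a) / exp a)"
      using p by (simp add: exp_diff diff_divide_distrib add_divide_distrib)
    also have "\<dots> = (exp b - exp a) / (exp b + exp a)" using p by simp
    finally show ?thesis by simp
  qed
  moreover have "0 \<le> (exp b - exp a) / (exp b + exp a)" using ab by (simp add: add_pos_pos)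
  ultimately have "cmod (phi (b, a)) = (exp (b - a) - 1) / (exp (b - a) + 1)"
    by (simp only: phi_def case_prod_conv norm_of_real)
  thus ?thesis using S by simp
qed

theorem mainTheorem18:
  fixes a b :: real
  assumes "a < b"
  shows "ereal (1/9 * min (b - a) (1 + log_plus (b - a)))
           \<le> schur_norm {a..b} {a..b}
                (\<lambda>(x, y). complex_of_real ((exp x - exp y) / (exp x + exp y)))"
proof -
  define L where "L = b - a"
  have L0: "0 < L" using assms by (simp add: L_def)
  define E where "E = exp L"
  have E1: "1 + L \<le> E" unfolding E_def by (rule exp_ge_add_one_self)
  have Epos: "0 < E" by (simp add: E_def)
  have phi_eq: "(\<lambda>(x, y). complex_of_real ((exp x - exp y) / (exp x + exp y))) = phi"
    by (simp add: phi_def)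
  have sm: "ereal ((E - 1) / (E + 1)) \<le> schur_norm {a..b} {a..b} phi"
    using small_case[OF assms] by (simp add: E_def L_def)
  have main: "ereal (1/9 * min (b - a) (1 + log_plus (b - a))) \<le> schur_norm {a..b} {a..b} phi"
  proof (cases "ln L \<le> 7")
    case False
    have L1: "1 \<le> L" using False L0 by (smt (verit) ln_le_zero_iff)
    have "1/9 * min L (1 + log_plus L) \<le> 1/9 * (1 + ln L)"
      using L1 by (simp add: log_plus_def)
    hence "ereal (1/9 * min L (1 + log_plus L)) \<le> ereal (1/9 * (1 + ln L))" by simp
    also have "\<dots> \<le> schur_norm {a..b} {a..b} phi"
      using big_case[OF assms] False by (simp add: L_def)
    finally show ?thesis by (simp add: L_def)
  next
    case True
    have "1/9 * min L (1 + log_plus L) \<le> (E - 1) / (E + 1)"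
    proof (cases "L \<le> 1")
      case True
      have "E \<le> exp 1" unfolding E_def using True by simp
      hence E8: "E + 1 \<le> 9" using exp_le by linarith
      have "1/9 * min L (1 + log_plus L) \<le> L / 9" by simp
      also have "\<dots> \<le> L / (E + 1)" using E8 L0 Epos by (intro divide_left_mono) auto
      also have "\<dots> \<le> (E - 1) / (E + 1)" using E1 Epos by (intro divide_right_mono) auto
      finally show ?thesis .
    next
      case L1: False
      have lp: "log_plus L = ln L" using L1 by (simp add: log_plus_def)
      show ?thesis
      proof (cases "ln L \<le> 2")
        case True
        have "1/9 * min L (1 + log_plus L) \<le> 1/3" using True lp by simp
        also have "1/3 \<le> (E - 1) / (E + 1)" using E1 L1 Epos by (simp add: field_simps)
        finally show ?thesis .
      next
        case False
        have "1 + 2 + 2^2/2 \<le> exp (2::real)" by (rule exp_lower_Taylor_quadratic) simp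
        moreover have "exp 2 \<le> L"
        proof -
          have "exp 2 \<le> exp (ln L)" using False by simp
          thus ?thesis using L0 by simp
        qed
        ultimately have L5: "5 \<le> L" by simp
        have "1 + L + L^2/2 \<le> E" unfolding E_def by (rule exp_lower_Taylor_quadratic) (use L0 in simp)
        moreover have "5 * 5 \<le> L * L" using L5 by (intro mult_mono) auto
        ultimately have E17: "17 \<le> E" using L5 by (simp add: power2_eq_square)
        have "1/9 * min L (1 + log_plus L) \<le> 8/9" using \<open>ln L \<le> 7\<close> lp by simp
        also have "8/9 \<le> (E - 1) / (E + 1)" using E17 Epos by (simp add: field_simps)
        finally show ?thesis .
      qed
    qed
    hence "ereal (1/9 * min L (1 + log_plus L)) \<le> ereal ((E - 1) / (E + 1))" by simp
    also note sm
    finally show ?thesis by (simp add: L_def)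
  qed
  thus ?thesis by (simp only: phi_eq)
qed

end
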